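(* Suppose Assumptions 1 and 3 hold and $\boldsymbol{x}\notin\mathcal{Z}$. Let $\boldsymbol{y}^*=(\boldsymbol{u}^*,\rho^* )$ with $\rho^*>0$ be a solution of $\boldsymbol{F}(\boldsymbol{y})=\boldsymbol{0}$. Then every $J\in\mathcal{J}_{\boldsymbol{F}}(\boldsymbol{y}^* )$ is nonsingular. Furthermore, there exist a neighborhood $N(\boldsymbol{y}^* )$ of $\boldsymbol{y}^*$ and a constant $C>0$ such that for every $\boldsymbol{y}\in N(\boldsymbol{y}^* )$ and every $J\in\mathcal{J}_{\boldsymbol{F}}(\boldsymbol{y})$, $J$ is nonsingular and $\|J^{-1}\|\le C$.
   Context: Assumption 1: $l:\mathbb{R}\to\mathbb{R}$ is nondecreasing and convex, and $\inf_x l(x)<\lambda$. Assumption 3: $l$ is differentiable and nonconstant, and $l'$ is semismooth with respect to its Clarke subdifferential $\partial l'$. $\mathcal{Z}=\{\boldsymbol{z}\in\mathbb{R}^m:\frac1m\sum_i l(z_i)\le\lambda\}$. $L(\boldsymbol{u})=\sum_{i=1}^m l(u_i)$, $\nabla L(\boldsymbol{u})=(l'(u_i))_{i}$, $\partial\nabla L(\boldsymbol{u})=\{\mathrm{diag}(\eta_1,\dots,\eta_m):\eta_i\in\partial l'(u_i)\}$. For $\boldsymbol{y}=(\boldsymbol{u},\rho)$: $\boldsymbol{F}(\boldsymbol{y})=\big(\boldsymbol{u}-\boldsymbol{x}+\frac{\rho}{m}\nabla L(\boldsymbol{u}),\ \frac1mL(\boldsymbol{u})-\lambda\big)$ and $\mathcal{J}_{\boldsymbol{F}}(\boldsymbol{y})=\Big\{\begin{bmatrix}\mathbf{I}+\frac{\rho}{m}\Lambda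 & \frac1m\nabla L(\boldsymbol{u})\\ \frac1m\nabla L(\boldsymbol{u})^\top & 0\end{bmatrix}:\Lambda\in\partial\nabla L(\boldsymbol{u})\Big\}$. $\|\cdot\|$ on matrices is the spectral norm. *)

theory Defs
  imports "HOL-Analysis.Analysis"
begin

definition clarke_subdiff :: "(real \<Rightarrow> real) \<Rightarrow> real \<Rightarrow> real set" where
  "clarke_subdiff g x = convex hull
     {d. \<exists>s::nat \<Rightarrow> real. s \<longlonglongrightarrow> x \<and> (\<forall>k. g differentiable (at (s k)))
                         \<and> (\<lambda>k. deriv g (s k)) \<longlonglongrightarrow> d}"

definition has_dir_deriv :: "(real \<Rightarrow> real) \<Rightarrow> real \<Rightarrow> real \<Rightarrow> real \<Rightarrow> bool" where
  "has_dir_deriv g x h d \<longleftrightarrow> ((\<lambda>t. (g (x + t * h) - g x) / t) \<longlongrightarrow> d) (at_right 0)"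

definition dir_deriv :: "(real \<Rightarrow> real) \<Rightarrow> real \<Rightarrow> real \<Rightarrow> real" where
  "dir_deriv g x h = (THE d. has_dir_deriv g x h d)"

definition semismooth_at :: "(real \<Rightarrow> real) \<Rightarrow> real \<Rightarrow> bool" where
  "semismooth_at g x \<longleftrightarrow>
     (\<exists>\<delta>>0. \<exists>K. K-lipschitz_on (ball x \<delta>) g) \<and>
     (\<forall>h. \<exists>d. has_dir_deriv g x h d) \<and>
     (\<forall>\<epsilon>>0. \<exists>\<delta>>0. \<forall>h V. 0 < \<bar>h\<bar> \<and> \<bar>h\<bar> < \<delta> \<and> V \<in> clarke_subdiff g (x + h) \<longrightarrow>
        \<bar>V * h - dir_deriv g x h\<bar> \<le> \<epsilon> * \<bar>h\<bar>)"

text \<open>Generalized Jacobian of F at y = (u, rho), as (m+1)x(m+1) matrices indexed by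
  'm + unit (Inl i = component i of u, Inr () = the rho component).
  eta i ranges over the Clarke subdifferential of l' at u_i.\<close>
definition JF_set :: "(real \<Rightarrow> real) \<Rightarrow> real^'m::finite \<Rightarrow> real \<Rightarrow> (real^('m + unit)^('m + unit)) set" where
  "JF_set l u \<rho> =
     {J. \<exists>\<eta>::'m \<Rightarrow> real. (\<forall>i. \<eta> i \<in> clarke_subdiff (deriv l) (u $ i)) \<and>
        J = (\<chi> a b. (case a of
               Inl i \<Rightarrow> (case b of
                          Inl j \<Rightarrow> (if i = j then 1 + \<rho> / real CARD('m) * \<eta> i else 0)
                        | Inr _ \<Rightarrow> deriv l (u $ i) / real CARD('m))
             | Inr _ \<Rightarrow> (case b of
                          Inl j \<Rightarrow> deriv l (u $ j) / real CARD('m)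
                        | Inr _ \<Rightarrow> 0)))}"

definition spec_norm :: "real^'n::finite^'k::finite \<Rightarrow> real" where
  "spec_norm A = onorm (\<lambda>v. A *v v)"

end

theory Submission
  imports Defs
begin
lemma core:
  fixes d b p r :: "'m::finite \<Rightarrow> real" and q t W Dm B1 \<beta> :: real
  assumes d1: "\<forall>i. 1 \<le> d i" and dD: "\<forall>i. d i \<le> Dm" and bB: "\<forall>i. \<bar>b i\<bar> \<le> B1"
    and beta: "\<beta> \<le> (\<Sum>i\<in>UNIV. (b i)^2)" "\<beta> > 0"
    and r: "\<forall>i. r i = d i * p i + b i * q" and t: "t = (\<Sum>i\<in>UNIV. b i * p i)"
    and rW: "\<forall>i. \<bar>r i\<bar> \<le> W" and tW: "\<bar>t\<bar> \<le> W"
  shows "\<bar>q\<bar> \<le> (real CARD('m) * B1 + 1) * Dm / \<beta> * W"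
    and "\<bar>p i\<bar> \<le> (1 + B1 * ((real CARD('m) * B1 + 1) * Dm / \<beta>)) * W"
proof -
  define S where "S = (\<Sum>j\<in>UNIV. (b j)^2 / d j)"
  have dpos: "d j > 0" for j using d1 by (smt (verit))
  have Dm1: "Dm \<ge> 1" using d1 dD by (meson order_trans)
  have W0: "W \<ge> 0" using tW by linarith
  have B0: "B1 \<ge> 0" using bB by (meson abs_ge_zero order_trans)
  have pj: "p j = (r j - b j * q) / d j" for j using r dpos[of j]
    by (simp add: field_simps)
  have "t = (\<Sum>j\<in>UNIV. b j * r j / d j - q * ((b j)^2 / d j))"
    unfolding t
  proof (rule sum.cong)
    fix j :: 'm
    have "d j \<noteq> 0" using dpos[of j] by simp
    then show "b j * p j = b j * r j / d j - q * ((b j)^2 / d j)"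
      by (subst pj) (simp add: field_simps power2_eq_square)
  qed simp
  also have "\<dots> = (\<Sum>j\<in>UNIV. b j * r j / d j) - q * S"
    by (simp add: S_def sum_subtractf sum_distrib_left)
  finally have qS: "q * S = (\<Sum>j\<in>UNIV. b j * r j / d j) - t" by simp
  have "(\<Sum>j\<in>UNIV. (b j)^2 / Dm) \<le> S" unfolding S_def
    by (rule sum_mono) (use dD dpos Dm1 in \<open>auto intro!: divide_left_mono mult_pos_pos\<close>)
  moreover have "(\<Sum>j\<in>UNIV. (b j)^2 / Dm) = (\<Sum>j\<in>UNIV. (b j)^2) / Dm"
    by (simp add: sum_divide_distrib)
  moreover have "\<beta> / Dm \<le> (\<Sum>j\<in>UNIV. (b j)^2) / Dm" using beta Dm1
    by (intro divide_right_mono) auto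
  ultimately have Sge: "\<beta> / Dm \<le> S" by linarith
  have Spos: "S > 0" using Sge beta Dm1 by (smt (verit) divide_pos_pos)
  have "\<bar>b j * r j / d j\<bar> \<le> B1 * W" for j
  proof -
    have e: "\<bar>b j * r j / d j\<bar> = \<bar>b j * r j\<bar> / d j" using dpos[of j] by (simp add: abs_divide)
    have "\<bar>b j * r j\<bar> \<le> \<bar>b j * r j\<bar> * d j" using d1 by (simp add: mult_le_cancel_left1)
    hence "\<bar>b j * r j\<bar> / d j \<le> \<bar>b j * r j\<bar>" using dpos[of j] by (simp add: divide_le_eq)
    hence "\<bar>b j * r j / d j\<bar> \<le> \<bar>b j * r j\<bar>" unfolding e .
    also have "\<dots> \<le> B1 * W" using bB rW by (simp add: abs_mult mult_mono')
    finally show ?thesis .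
  qed
  hence "(\<Sum>j\<in>UNIV. \<bar>b j * r j / d j\<bar>) \<le> (\<Sum>j\<in>(UNIV::'m set). B1 * W)"
    by (intro sum_mono) auto
  hence s1: "\<bar>\<Sum>j\<in>UNIV. b j * r j / d j\<bar> \<le> real CARD('m) * (B1 * W)"
    using sum_abs[of "\<lambda>j. b j * r j / d j" UNIV] by simp
  have "\<bar>q\<bar> * S = \<bar>q * S\<bar>" using Spos by (simp add: abs_mult)
  also have "\<dots> \<le> \<bar>\<Sum>j\<in>UNIV. b j * r j / d j\<bar> + \<bar>t\<bar>" unfolding qS by (rule abs_triangle_ineq4)
  also have "\<dots> \<le> real CARD('m) * (B1 * W) + W" using s1 tW by (rule add_mono)
  finally have "\<bar>q\<bar> * S \<le> (real CARD('m) * B1 + 1) * W" by (simp add: algebra_simps)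
  hence "\<bar>q\<bar> \<le> (real CARD('m) * B1 + 1) * W / S" using Spos by (simp add: field_simps)
  also have "\<dots> \<le> (real CARD('m) * B1 + 1) * W / (\<beta> / Dm)"
    using Sge beta Dm1 W0 B0 Spos by (intro divide_left_mono) auto
  finally show q: "\<bar>q\<bar> \<le> (real CARD('m) * B1 + 1) * Dm / \<beta> * W" by (simp add: field_simps)
  have "\<bar>p i\<bar> \<le> \<bar>p i\<bar> * d i" using d1 by (simp add: mult_le_cancel_left1)
  also have "\<dots> = \<bar>d i * p i\<bar>" using dpos[of i] by (simp add: abs_mult)
  also have "\<dots> = \<bar>r i - b i * q\<bar>" using r by simp
  also have "\<dots> \<le> \<bar>r i\<bar> + \<bar>b i * q\<bar>" by (rule abs_triangle_ineq4)
  also have "\<dots> = \<bar>r i\<bar> + \<bar>b i\<bar> * \<bar>q\<bar>" by (simp add: abs_mult)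
  also have "\<dots> \<le> W + B1 * ((real CARD('m) * B1 + 1) * Dm / \<beta> * W)"
    using rW bB q B0 by (intro add_mono mult_mono) auto
  finally show "\<bar>p i\<bar> \<le> (1 + B1 * ((real CARD('m) * B1 + 1) * Dm / \<beta>)) * W"
    by (simp add: algebra_simps)
qed

lemma inv_bound:
  fixes J :: "real^'n::finite^'n"
  assumes "C > 0" and H: "\<And>v. norm v \<le> C * norm (J *v v)"
  shows "invertible J \<and> spec_norm (matrix_inv J) \<le> C"
proof -
  have "inj ((*v) J)"
  proof (rule injI)
    fix v w assume "J *v v = J *v w"
    hence "J *v (v - w) = 0" by (simp add: matrix_vector_mult_diff_distrib)
    hence "norm (v - w) \<le> 0" using H[of "v - w"] by simp
    thus "v = w" by simp
  qed
  hence inv: "invertible J" using invertible_left_inverse matrix_left_invertible_injective by blast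
  hence "J ** matrix_inv J = mat 1" unfolding matrix_inv_def invertible_def
    by (metis (mono_tags, lifting) someI_ex)
  hence "norm (matrix_inv J *v w) \<le> C * norm w" for w
    using H[of "matrix_inv J *v w"] by (simp add: matrix_vector_mul_assoc)
  hence "spec_norm (matrix_inv J) \<le> C" unfolding spec_norm_def by (intro onorm_le) auto
  with inv show ?thesis by simp
qed

definition Jmat :: "real \<Rightarrow> ('m::finite \<Rightarrow> real) \<Rightarrow> ('m \<Rightarrow> real) \<Rightarrow> real^('m + unit)^('m + unit)" where
  "Jmat \<rho> \<eta> gg = (\<chi> a b. (case a of
               Inl i \<Rightarrow> (case b of
                          Inl j \<Rightarrow> (if i = j then 1 + \<rho> / real CARD('m) * \<eta> i else 0)
                        | Inr _ \<Rightarrow> gg i / real CARD('m))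
             | Inr _ \<Rightarrow> (case b of
                          Inl j \<Rightarrow> gg j / real CARD('m)
                        | Inr _ \<Rightarrow> 0)))"

lemma sum_UNIV_Plus: "(\<Sum>a\<in>(UNIV::('a::finite + 'b::finite) set). f a) = (\<Sum>i\<in>UNIV. f (Inl i)) + (\<Sum>j\<in>UNIV. f (Inr j))"
  by (subst UNIV_Plus_UNIV[symmetric], subst sum.Plus) (auto simp: comp_def)

lemma if_mult_r: "(if P then a else 0) * (c::real) = (if P then a * c else 0)" by simp

lemma Jmat_Inl: fixes \<eta> :: "'m::finite \<Rightarrow> real" shows "(Jmat \<rho> \<eta> gg *v v) $ Inl i = (1 + \<rho> / real CARD('m::finite) * \<eta> i) * v $ Inl i + gg i / real CARD('m) * v $ Inr ()"
  unfolding Jmat_def matrix_vector_mult_def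
  by (simp add: sum_UNIV_Plus if_mult_r sum.delta sum.delta' UNIV_unit)

lemma Jmat_Inr: fixes \<eta> :: "'m::finite \<Rightarrow> real" shows "(Jmat \<rho> \<eta> gg *v v) $ Inr () = (\<Sum>j\<in>UNIV. gg j / real CARD('m::finite) * v $ Inl j)"
  unfolding Jmat_def matrix_vector_mult_def
  by (simp add: sum_UNIV_Plus)


lemma J_bound:
  assumes K0: "K \<ge> 0" and R0: "R \<ge> 0" and G00: "G0 > 0"
  shows "\<exists>C>0. \<forall>\<rho> (\<eta>::'m::finite \<Rightarrow> real) gg v. (\<forall>i. 0 \<le> \<eta> i \<and> \<eta> i \<le> K) \<and> 0 \<le> \<rho> \<and> \<rho> \<le> R \<and>
     (\<forall>i. \<bar>gg i\<bar> \<le> G1) \<and> G0 \<le> (\<Sum>i\<in>UNIV. (gg i)^2) \<longrightarrow>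
     norm v \<le> C * norm (Jmat \<rho> \<eta> gg *v v)"
proof -
  define n where "n = real CARD('m)"
  have n0: "n > 0" unfolding n_def by simp
  define Dm where "Dm = 1 + R / n * K"
  define B1 where "B1 = G1 / n"
  define \<beta> where "\<beta> = G0 / n^2"
  define Cq where "Cq = (real CARD('m) * B1 + 1) * Dm / \<beta>"
  define P where "P = 1 + B1 * Cq"
  define C where "C = n * \<bar>P\<bar> + \<bar>Cq\<bar> + 1"
  have C0: "C > 0" unfolding C_def using n0 by (smt (verit) mult_nonneg_nonneg abs_ge_zero)
  have b0: "\<beta> > 0" unfolding \<beta>_def using G00 n0 by simp
  show ?thesis
  proof (intro exI[of _ C] conjI allI impI C0)
    fix \<rho> and \<eta> gg :: "'m \<Rightarrow> real" and v :: "real^('m+unit)"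
    assume H: "(\<forall>i. 0 \<le> \<eta> i \<and> \<eta> i \<le> K) \<and> 0 \<le> \<rho> \<and> \<rho> \<le> R \<and>
     (\<forall>i. \<bar>gg i\<bar> \<le> G1) \<and> G0 \<le> (\<Sum>i\<in>UNIV. (gg i)^2)"
    define W where "W = norm (Jmat \<rho> \<eta> gg *v v)"
    define d where "d i = 1 + \<rho> / real CARD('m) * \<eta> i" for i
    define b where "b i = gg i / real CARD('m)" for i
    have d1: "\<forall>i. 1 \<le> d i" unfolding d_def using H by simp
    have dD: "\<forall>i. d i \<le> Dm" unfolding d_def Dm_def n_def using H n0 K0
      by (auto intro!: mult_mono divide_right_mono simp: n_def)
    have bB: "\<forall>i. \<bar>b i\<bar> \<le> B1" unfolding b_def B1_def n_def using H n0
      by (auto intro!: divide_right_mono simp: n_def)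
    have "(\<Sum>i\<in>UNIV. (b i)^2) = (\<Sum>i\<in>UNIV. (gg i)^2) / n^2"
      unfolding b_def n_def by (simp add: power_divide sum_divide_distrib)
    hence beta: "\<beta> \<le> (\<Sum>i\<in>UNIV. (b i)^2)" unfolding \<beta>_def using H n0
      by (simp add: divide_right_mono)
    have r: "\<forall>i. (Jmat \<rho> \<eta> gg *v v) $ Inl i = d i * v $ Inl i + b i * v $ Inr ()"
      unfolding d_def b_def by (simp add: Jmat_Inl)
    have t: "(Jmat \<rho> \<eta> gg *v v) $ Inr () = (\<Sum>i\<in>UNIV. b i * v $ Inl i)"
      unfolding b_def by (simp add: Jmat_Inr)
    have rW: "\<forall>i. \<bar>(Jmat \<rho> \<eta> gg *v v) $ Inl i\<bar> \<le> W" unfolding W_def by (simp add: component_le_norm_cart)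
    have tW: "\<bar>(Jmat \<rho> \<eta> gg *v v) $ Inr ()\<bar> \<le> W" unfolding W_def by (simp add: component_le_norm_cart)
    have W0: "W \<ge> 0" unfolding W_def by simp
    note cr = core[OF d1 dD bB beta b0 r t rW tW]
    have q: "\<bar>v $ Inr ()\<bar> \<le> Cq * W" using cr(1) unfolding Cq_def .
    have p: "\<bar>v $ Inl i\<bar> \<le> P * W" for i using cr(2)[of i] unfolding P_def Cq_def .
    have "norm v \<le> (\<Sum>a\<in>UNIV. \<bar>v $ a\<bar>)" by (rule norm_le_l1_cart)
    also have "\<dots> = (\<Sum>i\<in>UNIV. \<bar>v $ Inl i\<bar>) + \<bar>v $ Inr ()\<bar>"
      by (simp add: sum_UNIV_Plus UNIV_unit)
    also have "\<dots> \<le> (\<Sum>i\<in>(UNIV::'m set). P * W) + Cq * W"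
      using p q by (intro add_mono sum_mono) auto
    also have "\<dots> = n * P * W + Cq * W" by (simp add: n_def)
    also have "\<dots> = (n * P + Cq) * W" by (simp add: algebra_simps)
    also have "\<dots> \<le> C * W"
    proof (rule mult_right_mono[OF _ W0])
      have "n * P \<le> n * \<bar>P\<bar>" using n0 by (intro mult_left_mono) auto
      thus "n * P + Cq \<le> C" unfolding C_def by linarith
    qed
    finally show "norm v \<le> C * norm (Jmat \<rho> \<eta> gg *v v)" unfolding W_def .
  qed
qed

lemma deriv_mono_convex:
  assumes cv: "convex_on UNIV l" and df: "\<forall>t. l differentiable (at t)"
  shows "mono (deriv l)"
proof (rule monoI)
  fix a b :: real assume ab: "a \<le> b"
  show "deriv l a \<le> deriv l b"
  proof (cases "a = b")
    case False
    hence ab': "a < b" using ab by simp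
    have Da: "(l has_field_derivative deriv l a) (at a within UNIV)"
      using df DERIV_deriv_iff_real_differentiable by blast
    have Db: "(l has_field_derivative deriv l b) (at b within UNIV)"
      using df DERIV_deriv_iff_real_differentiable by blast
    have 1: "l b - l a \<ge> deriv l a * (b - a)"
      by (rule convex_on_imp_above_tangent[OF cv]) (use Da in auto)
    have 2: "l a - l b \<ge> deriv l b * (a - b)"
      by (rule convex_on_imp_above_tangent[OF cv]) (use Db in auto)
    have "deriv l a * (b - a) \<le> deriv l b * (b - a)" using 1 2 by (simp add: algebra_simps)
    thus ?thesis using ab' by (simp add: mult_le_cancel_right)
  qed simp
qed

lemma deriv_bounds:
  fixes g :: "real \<Rightarrow> real"
  assumes gm: "mono g" and L: "K-lipschitz_on (ball c \<delta>) g" and x: "x \<in> ball c \<delta>"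
    and dg: "g differentiable (at x)"
  shows "0 \<le> deriv g x \<and> deriv g x \<le> K"
proof -
  have "(g has_field_derivative deriv g x) (at x)"
    using dg DERIV_deriv_iff_real_differentiable by blast
  hence T: "((\<lambda>y. (g y - g x) / (y - x)) \<longlongrightarrow> deriv g x) (at x)"
    by (simp add: has_field_derivative_iff)
  have ev: "eventually (\<lambda>y. y \<in> ball c \<delta> - {x}) (at x)"
    using eventually_at_in_open[of "ball c \<delta>" x] x by simp
  have "eventually (\<lambda>y. 0 \<le> (g y - g x) / (y - x)) (at x)"
  proof (rule eventually_mono[OF ev])
    fix y assume "y \<in> ball c \<delta> - {x}"
    show "0 \<le> (g y - g x) / (y - x)"
    proof (cases "x \<le> y")
      case True thus ?thesis using gm by (simp add: monoD divide_nonneg_nonneg)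
    next
      case False thus ?thesis using gm monoD[OF gm, of y x]
        by (intro divide_nonpos_nonpos) auto
    qed
  qed
  hence lo: "0 \<le> deriv g x" by (rule tendsto_lowerbound[OF T]) simp
  have "eventually (\<lambda>y. (g y - g x) / (y - x) \<le> K) (at x)"
  proof (rule eventually_mono[OF ev])
    fix y assume y: "y \<in> ball c \<delta> - {x}"
    have "dist (g y) (g x) \<le> K * dist y x" using lipschitz_onD[OF L, of y x] y x by simp
    hence "\<bar>g y - g x\<bar> \<le> K * \<bar>y - x\<bar>" by (simp add: dist_real_def)
    hence "\<bar>g y - g x\<bar> / \<bar>y - x\<bar> \<le> K" using y by (simp add: divide_le_eq)
    hence "\<bar>(g y - g x) / (y - x)\<bar> \<le> K" by (simp add: abs_divide)
    thus "(g y - g x) / (y - x) \<le> K" by linarith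
  qed
  hence hi: "deriv g x \<le> K" by (rule tendsto_upperbound[OF T]) simp
  from lo hi show ?thesis by simp
qed

lemma clarke_bounds:
  fixes g :: "real \<Rightarrow> real"
  assumes gm: "mono g" and L: "K-lipschitz_on (ball c \<delta>) g" and t: "t \<in> ball c \<delta>"
    and e: "\<eta> \<in> clarke_subdiff g t"
  shows "0 \<le> \<eta> \<and> \<eta> \<le> K"
proof -
  have "{d. \<exists>s::nat \<Rightarrow> real. s \<longlonglongrightarrow> t \<and> (\<forall>k. g differentiable (at (s k)))
                         \<and> (\<lambda>k. deriv g (s k)) \<longlonglongrightarrow> d} \<subseteq> {0..K}"
  proof
    fix d assume "d \<in> {d. \<exists>s::nat \<Rightarrow> real. s \<longlonglongrightarrow> t \<and> (\<forall>k. g differentiable (at (s k)))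
                         \<and> (\<lambda>k. deriv g (s k)) \<longlonglongrightarrow> d}"
    then obtain s where s: "s \<longlonglongrightarrow> t" "\<forall>k. g differentiable (at (s k))"
      "(\<lambda>k. deriv g (s k)) \<longlonglongrightarrow> d" by blast
    have "eventually (\<lambda>k. s k \<in> ball c \<delta>) sequentially"
      using topological_tendstoD[OF s(1), of "ball c \<delta>"] t by simp
    hence ev: "eventually (\<lambda>k. 0 \<le> deriv g (s k) \<and> deriv g (s k) \<le> K) sequentially"
      by (rule eventually_mono) (use deriv_bounds[OF gm L] s(2) in blast)
    have "0 \<le> d" by (rule tendsto_lowerbound[OF s(3)]) (use ev in \<open>auto elim: eventually_mono\<close>)
    moreover have "d \<le> K" by (rule tendsto_upperbound[OF s(3)]) (use ev in \<open>auto elim: eventually_mono\<close>)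
    ultimately show "d \<in> {0..K}" by simp
  qed
  hence "clarke_subdiff g t \<subseteq> {0..K}" unfolding clarke_subdiff_def
    by (intro hull_minimal) (auto simp: convex_real_interval)
  thus ?thesis using e by auto
qed

lemma lip_isCont:
  assumes "K-lipschitz_on (ball t \<delta>) g" "\<delta> > 0"
  shows "isCont g (t::real)"
  using continuous_on_interior[OF lipschitz_on_continuous_on[OF assms(1)], of t] assms(2)
  by simp

theorem mainTheorem5:
  fixes l :: "real \<Rightarrow> real" and lam :: real
    and x u_star :: "real^'m::finite" and \<rho>_star :: real
  assumes A1_mono: "mono l"
    and A1_convex: "convex_on UNIV l"
    and A1_inf: "\<exists>t. l t < lam"
    and A3_diff: "\<forall>t. l differentiable (at t)"
    and A3_nonconst: "\<exists>a b. l a \<noteq> l b"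
    and A3_semismooth: "\<forall>t. semismooth_at (deriv l) t"
    and x_notin_Z: "\<not> ((1 / real CARD('m)) * (\<Sum>i\<in>UNIV. l (x $ i)) \<le> lam)"
    and F1: "u_star - x + (\<rho>_star / real CARD('m)) *\<^sub>R (\<chi> i. deriv l (u_star $ i)) = 0"
    and F2: "(1 / real CARD('m)) * (\<Sum>i\<in>UNIV. l (u_star $ i)) - lam = 0"
    and rho_pos: "\<rho>_star > 0"
  shows "(\<forall>J\<in>JF_set l u_star \<rho>_star. invertible J) \<and>
         (\<exists>N C. open N \<and> (u_star, \<rho>_star) \<in> N \<and> C > 0 \<and>
            (\<forall>u \<rho> J. (u, \<rho>) \<in> N \<and> J \<in> JF_set l u \<rho> \<longrightarrow>
                invertible J \<and> spec_norm (matrix_inv J) \<le> C))"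
proof -
  define g where "g = deriv l"
  have gm: "mono g" unfolding g_def by (rule deriv_mono_convex[OF A1_convex A3_diff])
  have lip: "\<forall>t. \<exists>\<delta>>0. \<exists>K. K-lipschitz_on (ball t \<delta>) g"
    using A3_semismooth unfolding semismooth_at_def g_def by blast
  have cont: "isCont g t" for t
    using lip lip_isCont by blast
  have "\<forall>i. \<exists>p::real\<times>real. fst p > 0 \<and> (snd p)-lipschitz_on (ball (u_star $ i) (fst p)) g"
    using lip by fastforce
  hence "\<exists>P. \<forall>i. fst (P i) > 0 \<and> (snd (P i))-lipschitz_on (ball (u_star $ i) (fst (P i))) g"
    by (rule choice)
  then obtain P where P: "\<forall>i. fst (P i) > 0 \<and> (snd (P i))-lipschitz_on (ball (u_star $ i) (fst (P i))) g"
    by blast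
  define \<delta>f where "\<delta>f i = fst (P i)" for i
  define Kf where "Kf i = snd (P i)" for i
  have dK: "\<forall>i. \<delta>f i > 0 \<and> (Kf i)-lipschitz_on (ball (u_star $ i) (\<delta>f i)) g"
    using P unfolding \<delta>f_def Kf_def by blast
  define \<delta>0 where "\<delta>0 = Min (range \<delta>f)"
  have d0: "\<delta>0 > 0" unfolding \<delta>0_def using dK by (subst Min_gr_iff) auto
  have d0le: "\<delta>0 \<le> \<delta>f i" for i unfolding \<delta>0_def by (rule Min_le) auto
  define Km where "Km = Max (range Kf)"
  have Kle: "Kf i \<le> Km" for i unfolding Km_def by (rule Max_ge) auto
  have Km0: "Km \<ge> 0" using Kle[of undefined] lipschitz_on_nonneg dK by (meson order_trans)
  define G where "G u = (\<chi> i. g (u $ i))" for u :: "real^'m"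
  have Gc: "isCont G u_star" unfolding isCont_def G_def
  proof (rule tendsto_vec_lambda)
    fix i show "((\<lambda>u. g (u $ i)) \<longlongrightarrow> g (u_star $ i)) (at u_star)"
      by (rule isCont_tendsto_compose[OF cont]) (intro tendsto_vec_nth tendsto_ident_at)
  qed
  have G0: "G u_star \<noteq> 0"
  proof
    assume "G u_star = 0"
    hence "u_star = x" using F1 unfolding G_def g_def by simp
    thus False using F2 x_notin_Z by simp
  qed
  define e where "e = norm (G u_star) / 2"
  have e0: "e > 0" unfolding e_def using G0 by simp
  obtain \<delta>1 where d1: "\<delta>1 > 0" "\<forall>u. dist u u_star < \<delta>1 \<longrightarrow> dist (G u) (G u_star) < e"
    using Gc e0 unfolding continuous_at_eps_delta by blast
  define \<delta>N where "\<delta>N = min \<delta>0 \<delta>1"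
  define N where "N = ball u_star \<delta>N \<times> {\<rho>_star / 2 <..< 2 * \<rho>_star}"
  have Nopen: "open N" unfolding N_def by (intro open_Times) auto
  have Nin: "(u_star, \<rho>_star) \<in> N" unfolding N_def \<delta>N_def using d0 d1 rho_pos by auto
  obtain C where C: "C > 0" "\<forall>\<rho> (\<eta>::'m \<Rightarrow> real) gg v. (\<forall>i. 0 \<le> \<eta> i \<and> \<eta> i \<le> Km) \<and> 0 \<le> \<rho> \<and> \<rho> \<le> 2 * \<rho>_star \<and>
     (\<forall>i. \<bar>gg i\<bar> \<le> 3 * e) \<and> e^2 \<le> (\<Sum>i\<in>UNIV. (gg i)^2) \<longrightarrow>
     norm v \<le> C * norm (Jmat \<rho> \<eta> gg *v v)"
    using J_bound[OF Km0, of "2 * \<rho>_star" "e^2" "3 * e"] rho_pos e0 by auto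
  have main: "invertible J \<and> spec_norm (matrix_inv J) \<le> C"
    if uN: "(u, \<rho>) \<in> N" and J: "J \<in> JF_set l u \<rho>" for u \<rho> J
  proof -
    obtain \<eta> where \<eta>: "\<forall>i. \<eta> i \<in> clarke_subdiff g (u $ i)" and
      Jeq: "J = Jmat \<rho> \<eta> (\<lambda>i. g (u $ i))"
      using J unfolding JF_set_def Jmat_def g_def by blast
    have du: "dist u u_star < \<delta>0" "dist u u_star < \<delta>1" "\<rho>_star / 2 < \<rho>" "\<rho> < 2 * \<rho>_star"
      using uN unfolding N_def \<delta>N_def by (auto simp: dist_commute)
    have eb: "0 \<le> \<eta> i \<and> \<eta> i \<le> Km" for i
    proof -
      have "dist (u_star $ i) (u $ i) < \<delta>f i"
        using dist_vec_nth_le[of u_star i u] du(1) d0le[of i] by (simp add: dist_commute)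
      hence "u $ i \<in> ball (u_star $ i) (\<delta>f i)" by simp
      hence "0 \<le> \<eta> i \<and> \<eta> i \<le> Kf i" using clarke_bounds[OF gm _ _ \<eta>[rule_format, of i]] dK by blast
      thus ?thesis using Kle[of i] by linarith
    qed
    have Gd: "norm (G u - G u_star) < e" using d1(2) du(2) by (simp add: dist_norm)
    have Gu_hi: "norm (G u) \<le> 3 * e"
      using norm_triangle_ineq[of "G u - G u_star" "G u_star"] Gd e_def by simp
    have Gu_lo: "e \<le> norm (G u)"
      using norm_triangle_ineq[of "G u_star - G u" "G u"] Gd e_def by (simp add: norm_minus_commute)
    have gb: "\<bar>g (u $ i)\<bar> \<le> 3 * e" for i
      using component_le_norm_cart[of "G u" i] Gu_hi unfolding G_def by simp
    have "(\<Sum>i\<in>UNIV. (g (u $ i))^2) = (norm (G u))^2"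
      unfolding power2_norm_eq_inner inner_vec_def G_def by (simp add: power2_eq_square)
    hence gs: "e^2 \<le> (\<Sum>i\<in>UNIV. (g (u $ i))^2)"
      using Gu_lo e0 by (simp add: power_mono)
    have "norm v \<le> C * norm (J *v v)" for v
      using C(2) eb gs gb du rho_pos unfolding Jeq by auto
    thus ?thesis by (rule inv_bound[OF C(1)])
  qed
  show ?thesis
    using main Nin Nopen C(1) by blast
qed

end
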